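(* Let $(X,d)$ be an ultrametric space, let $\mathcal{U}_0=\{X\}$ and $\mathcal{U}_n=\{B(x,\tfrac1n):x\in X\}$ for $n\in\mathbb{N}_+$. Then $\mathcal{A}=\{\mathcal{U}_n\}_{n\in\mathbb{N}}$ is a tame defining sequence of $X$, which is complete if and only if the ultrametric $u_{\mathcal{A}}$ is complete.
   Context: An ultrametric space satisfies $d(x,z)\le\max\{d(x,y),d(y,z)\}$; $B(x,r)$ is the open ball of radius $r$ at $x$. A partition is a cover by pairwise disjoint nonempty clopen sets; $\mathcal{U}[x]$ is the element containing $x$. A defining sequence is a sequence $\{\mathcal{U}_n\}$ of partitions with each element of $\mathcal{U}_{n+1}$ contained in an element of $\mathcal{U}_n$ and $\bigcup_n\mathcal{U}_n$ a basis; complete if nested sequences $U_n\in\mathcal{U}_n$ have nonempty intersection; tame (w.r.t. $d$) if $\sup\{\operatorname{diam}O:O\in\mathcal{U}_n\}\to0$ and for each $n$ there is $\rho_n>0$ with points in distinct elements of $\mathcal{U}_n$ at distance $\ge\rho_n$. $u_{\mathcal{A}}(x,y)=1/(1+j)$, $j=\inf\{n:\mathcal{U}_n[x]\ne\mathcal{U}_n[y]\}$. *)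

theory Defs
  imports "HOL-Analysis.Analysis"
begin

text \<open>The space X is the whole carrier type 'a of class metric_space, with d = dist
  and the metric topology.\<close>

definition ultrametric_space :: "'a::metric_space itself \<Rightarrow> bool" where
  "ultrametric_space _ \<longleftrightarrow> (\<forall>x y z::'a. dist x z \<le> max (dist x y) (dist y z))"

definition is_partition :: "'a::topological_space set set \<Rightarrow> bool" where
  "is_partition U \<longleftrightarrow>
     (\<forall>W\<in>U. W \<noteq> {} \<and> open W \<and> closed W) \<and>
     (\<forall>W\<in>U. \<forall>W'\<in>U. W \<noteq> W' \<longrightarrow> W \<inter> W' = {}) \<and>
     \<Union>U = UNIV"

definition elem_of :: "'a set set \<Rightarrow> 'a \<Rightarrow> 'a set" where
  "elem_of U x = (THE W. W \<in> U \<and> x \<in> W)"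

definition defining_sequence :: "(nat \<Rightarrow> 'a::topological_space set set) \<Rightarrow> bool" where
  "defining_sequence \<U> \<longleftrightarrow>
     (\<forall>n. is_partition (\<U> n)) \<and>
     (\<forall>n. \<forall>W\<in>\<U> (Suc n). \<exists>P\<in>\<U> n. W \<subseteq> P) \<and>
     topological_basis (\<Union>n. \<U> n)"

definition complete_defining_sequence :: "(nat \<Rightarrow> 'a set set) \<Rightarrow> bool" where
  "complete_defining_sequence \<U> \<longleftrightarrow>
     (\<forall>V::nat \<Rightarrow> 'a set. (\<forall>n. V n \<in> \<U> n) \<and> (\<forall>n. V (Suc n) \<subseteq> V n)
        \<longrightarrow> (\<Inter>n. V n) \<noteq> {})"

definition tame_defining_sequence :: "(nat \<Rightarrow> 'a::metric_space set set) \<Rightarrow> bool" where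
  "tame_defining_sequence \<U> \<longleftrightarrow>
     (\<forall>\<epsilon>>0. \<exists>N. \<forall>n\<ge>N. \<forall>W\<in>\<U> n. \<forall>x\<in>W. \<forall>y\<in>W. dist x y \<le> \<epsilon>) \<and>
     (\<forall>n. \<exists>\<rho>>0. \<forall>W\<in>\<U> n. \<forall>W'\<in>\<U> n. W \<noteq> W' \<longrightarrow>
          (\<forall>x\<in>W. \<forall>y\<in>W'. dist x y \<ge> \<rho>))"

definition u_A :: "(nat \<Rightarrow> 'a set set) \<Rightarrow> 'a \<Rightarrow> 'a \<Rightarrow> real" where
  "u_A \<U> x y =
     (if \<exists>n. elem_of (\<U> n) x \<noteq> elem_of (\<U> n) y
      then 1 / (1 + real (LEAST n. elem_of (\<U> n) x \<noteq> elem_of (\<U> n) y))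
      else 0)"

definition u_A_complete :: "(nat \<Rightarrow> 'a set set) \<Rightarrow> bool" where
  "u_A_complete \<U> \<longleftrightarrow>
     (\<forall>f::nat \<Rightarrow> 'a. (\<forall>\<epsilon>>0. \<exists>N. \<forall>m\<ge>N. \<forall>n\<ge>N. u_A \<U> (f m) (f n) < \<epsilon>)
        \<longrightarrow> (\<exists>x. \<forall>\<epsilon>>0. \<exists>N. \<forall>n\<ge>N. u_A \<U> (f n) x < \<epsilon>))"

definition ball_sequence :: "nat \<Rightarrow> 'a::metric_space set set" where
  "ball_sequence n = (if n = 0 then {UNIV} else range (\<lambda>x. ball x (1 / real n)))"

end

theory Submission
  imports Defs
begin

lemma um_ineq:
  assumes "ultrametric_space TYPE('a::metric_space)"
  shows "dist (x::'a) z \<le> max (dist x y) (dist y z)"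
  using assms unfolding ultrametric_space_def by blast

lemma um_ball_sub:
  assumes "ultrametric_space TYPE('a::metric_space)" "(y::'a) \<in> ball x r"
  shows "ball y r \<subseteq> ball x r"
proof
  fix z assume "z \<in> ball y r"
  then have "dist y z < r" by simp
  moreover have "dist x y < r" using assms(2) by simp
  ultimately show "z \<in> ball x r" using um_ineq[OF assms(1), of x z y] by simp
qed

lemma um_ball_eq:
  assumes "ultrametric_space TYPE('a::metric_space)" "(y::'a) \<in> ball x r"
  shows "ball y r = ball x r"
proof
  show "ball y r \<subseteq> ball x r" using um_ball_sub[OF assms] .
  have "x \<in> ball y r" using assms(2) by (simp add: dist_commute)
  then show "ball x r \<subseteq> ball y r" using um_ball_sub[OF assms(1)] by blast
qed

lemma um_ball_closed:
  assumes "ultrametric_space TYPE('a::metric_space)"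
  shows "closed (ball (x::'a) r)"
proof -
  have "open (- ball x r)" if rpos: "r > 0"
  proof (rule openI)
    fix z assume z: "z \<in> - ball x r"
    have "ball z r \<subseteq> - ball x r"
    proof
      fix w assume w: "w \<in> ball z r"
      show "w \<in> - ball x r"
      proof
        assume "w \<in> ball x r"
        then have "ball w r = ball x r" using um_ball_eq[OF assms] by blast
        moreover have "ball w r = ball z r" using um_ball_eq[OF assms w] .
        moreover have "z \<in> ball z r" using rpos by auto
        ultimately show False using z by auto
      qed
    qed
    moreover have "0 < r" using rpos .
    ultimately show "\<exists>e>0. ball z e \<subseteq> - ball x r" by blast
  qed
  moreover have "open (- ball x r)" if "\<not> r > 0"
  proof -
    have "ball x r = {}" using that by (simp add: ball_eq_empty)
    then show "open (- ball x r)" by (simp only: Compl_empty_eq open_UNIV)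
  qed
  ultimately have "open (- ball x r)" by blast
  then show ?thesis by (simp add: closed_def)
qed

lemma elem_of_bs:
  assumes "ultrametric_space TYPE('a::metric_space)" "n > 0"
  shows "elem_of (ball_sequence n) (x::'a) = ball x (1 / real n)"
  unfolding elem_of_def
proof (rule the_equality)
  show "ball x (1 / real n) \<in> ball_sequence n \<and> x \<in> ball x (1 / real n)"
    using assms(2) by (simp add: ball_sequence_def)
next
  fix W assume H: "W \<in> ball_sequence n \<and> x \<in> W"
  then have "W \<in> range (\<lambda>c. ball c (1 / real n))" using assms(2) by (simp add: ball_sequence_def)
  then obtain c where W: "W = ball c (1 / real n)" by blast
  have "x \<in> ball c (1 / real n)" using H W by simp
  then show "W = ball x (1 / real n)" using um_ball_eq[OF assms(1), of x c] W by simp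
qed

lemma elem_of_bs0: "elem_of (ball_sequence 0) x = UNIV"
  unfolding elem_of_def ball_sequence_def by (rule the_equality) auto

lemma uA_small:
  assumes "ultrametric_space TYPE('a::metric_space)" "n > 0" "dist (x::'a) y < 1 / real n"
  shows "u_A ball_sequence x y < 1 / (real n + 1)"
proof (cases "\<exists>k. elem_of (ball_sequence k) x \<noteq> elem_of (ball_sequence k) y")
  case False
  then show ?thesis by (simp add: u_A_def)
next
  case True
  define j where "j = (LEAST k. elem_of (ball_sequence k) x \<noteq> elem_of (ball_sequence k) y)"
  have j: "elem_of (ball_sequence j) x \<noteq> elem_of (ball_sequence j) y"
    using LeastI_ex[OF True] unfolding j_def .
  have "j > n"
  proof (rule ccontr)
    assume "\<not> j > n"
    then have jn: "j \<le> n" by simp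
    show False
    proof (cases "j = 0")
      case True then show False using j by (simp add: elem_of_bs0)
    next
      case False
      have "1 / real n \<le> 1 / real j" using False jn by (intro frac_le) auto
      then have "y \<in> ball x (1 / real j)" using assms(3) by simp
      then have "ball y (1 / real j) = ball x (1 / real j)" using um_ball_eq[OF assms(1)] by blast
      then show False using j elem_of_bs[OF assms(1)] False by auto
    qed
  qed
  then have "1 / (1 + real j) < 1 / (real n + 1)" by (intro frac_less2) auto
  moreover have "u_A ball_sequence x y = 1 / (1 + real j)" using True by (simp add: u_A_def j_def)
  ultimately show ?thesis by simp
qed

lemma uA_small_dist:
  assumes "ultrametric_space TYPE('a::metric_space)" "n > 0"
    "u_A ball_sequence (x::'a) y < 1 / (real n + 1)"
  shows "dist x y < 1 / real n"
proof -
  have "elem_of (ball_sequence n) x = elem_of (ball_sequence n) y"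
  proof (cases "\<exists>k. elem_of (ball_sequence k) x \<noteq> elem_of (ball_sequence k) y")
    case False
    then show ?thesis by simp
  next
    case True
    define j where "j = (LEAST k. elem_of (ball_sequence k) x \<noteq> elem_of (ball_sequence k) y)"
    have "1 / (1 + real j) < 1 / (real n + 1)" using assms(3) True by (simp add: u_A_def j_def)
    then have "n < j"
    proof (rule contrapos_pp)
      assume "\<not> n < j"
      then have "1 / (real n + 1) \<le> 1 / (1 + real j)" by (intro frac_le) auto
      then show "\<not> 1 / (1 + real j) < 1 / (real n + 1)" by simp
    qed
    then show ?thesis using not_less_Least j_def by blast
  qed
  then have "ball x (1 / real n) = ball y (1 / real n)" using elem_of_bs[OF assms(1,2)] by simp
  moreover have "y \<in> ball y (1 / real n)" using assms(2) by simp
  ultimately show ?thesis by (metis mem_ball)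
qed


lemma bs_cases:
  assumes "W \<in> ball_sequence n" "n > 0"
  obtains c where "W = ball c (1 / real n)"
  using assms by (auto simp: ball_sequence_def)

lemma bs_partition:
  assumes um: "ultrametric_space TYPE('a::metric_space)"
  shows "is_partition (ball_sequence n :: 'a set set)"
proof (cases "n = 0")
  case True then show ?thesis by (simp add: is_partition_def ball_sequence_def)
next
  case False
  then have n: "n > 0" by simp
  have A: "\<forall>W\<in>ball_sequence n. W \<noteq> {} \<and> open W \<and> closed (W::'a set)"
  proof
    fix W :: "'a set" assume W: "W \<in> ball_sequence n"
    obtain c where c: "W = ball c (1 / real n)" using bs_cases[OF W n] .
    have "c \<in> W" using c n by simp
    then show "W \<noteq> {} \<and> open W \<and> closed W" using c um_ball_closed[OF um] by auto
  qed
  have B: "\<forall>W\<in>ball_sequence n. \<forall>W'\<in>ball_sequence n. W \<noteq> W' \<longrightarrow> W \<inter> (W'::'a set) = {}"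
  proof (intro ballI impI)
    fix W W' :: "'a set" assume W: "W \<in> ball_sequence n" and W': "W' \<in> ball_sequence n" and ne: "W \<noteq> W'"
    obtain a where a: "W = ball a (1 / real n)" using bs_cases[OF W n] .
    obtain b where b: "W' = ball b (1 / real n)" using bs_cases[OF W' n] .
    show "W \<inter> W' = {}"
    proof (rule ccontr)
      assume "W \<inter> W' \<noteq> {}"
      then obtain z where "z \<in> W" "z \<in> W'" by blast
      have "ball z (1 / real n) = W" using um_ball_eq[OF um, of z a] a \<open>z \<in> W\<close> by simp
      moreover have "ball z (1 / real n) = W'" using um_ball_eq[OF um, of z b] b \<open>z \<in> W'\<close> by simp
      ultimately show False using ne by simp
    qed
  qed
  have C: "\<Union>(ball_sequence n) = (UNIV::'a set)"
  proof -
    have "x \<in> ball x (1 / real n) \<and> ball x (1 / real n) \<in> ball_sequence n" for x :: 'a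
      using n by (simp add: ball_sequence_def)
    then show ?thesis by blast
  qed
  show ?thesis using A B C by (simp add: is_partition_def)
qed

lemma arch_inv:
  assumes "(e::real) > 0"
  obtains n :: nat where "n > 0" "1 / real n < e"
proof -
  obtain n :: nat where "inverse (real (Suc n)) < e" using reals_Archimedean[OF assms] by blast
  then show ?thesis using that[of "Suc n"] by (simp add: inverse_eq_divide)
qed

lemma bs_defining:
  assumes um: "ultrametric_space TYPE('a::metric_space)"
  shows "defining_sequence (ball_sequence :: nat \<Rightarrow> 'a set set)"
proof -
  have R: "\<forall>n. \<forall>W\<in>ball_sequence (Suc n). \<exists>P\<in>ball_sequence n. W \<subseteq> (P::'a set)"
  proof (intro allI ballI)
    fix n and W :: "'a set" assume W: "W \<in> ball_sequence (Suc n)"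
    obtain c where c: "W = ball c (1 / real (Suc n))" using bs_cases[OF W] by blast
    show "\<exists>P\<in>ball_sequence n. W \<subseteq> P"
    proof (cases "n = 0")
      case True then show ?thesis by (simp add: ball_sequence_def)
    next
      case False
      have "1 / real (Suc n) \<le> 1 / real n" using False by (intro frac_le) auto
      then have "W \<subseteq> ball c (1 / real n)" using c by auto
      moreover have "ball c (1 / real n) \<in> ball_sequence n" using False by (simp add: ball_sequence_def)
      ultimately show ?thesis by blast
    qed
  qed
  have O: "\<And>B'. B' \<in> (\<Union>n. ball_sequence n) \<Longrightarrow> open (B'::'a set)"
    using bs_partition[OF um] by (auto simp: is_partition_def)
  have T: "topological_basis (\<Union>n. ball_sequence n :: 'a set set)"
  proof (rule topological_basisI)
    show "\<And>B'. B' \<in> (\<Union>n. ball_sequence n) \<Longrightarrow> open (B'::'a set)" by (rule O)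
  next
    fix O' :: "'a set" and x assume "open O'" "x \<in> O'"
    then obtain e where e: "e > 0" "ball x e \<subseteq> O'" by (meson open_contains_ball)
    obtain n where n: "n > 0" "1 / real n < e" using arch_inv[OF e(1)] by blast
    have "ball x (1 / real n) \<in> ball_sequence n" using n by (simp add: ball_sequence_def)
    moreover have "x \<in> ball x (1 / real n)" using n by simp
    moreover have "ball x (1 / real n) \<subseteq> O'" using e n by auto
    ultimately show "\<exists>B'\<in>(\<Union>n. ball_sequence n). x \<in> B' \<and> B' \<subseteq> O'" by blast
  qed
  show ?thesis using R T bs_partition[OF um] by (simp add: defining_sequence_def)
qed

lemma bs_tame:
  assumes um: "ultrametric_space TYPE('a::metric_space)"
  shows "tame_defining_sequence (ball_sequence :: nat \<Rightarrow> 'a set set)"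
proof -
  have D: "\<forall>\<epsilon>>0. \<exists>N. \<forall>n\<ge>N. \<forall>W\<in>ball_sequence n. \<forall>x\<in>W. \<forall>y\<in>W. dist (x::'a) y \<le> \<epsilon>"
  proof (intro allI impI)
    fix \<epsilon> :: real assume "\<epsilon> > 0"
    then obtain N where N: "N > 0" "1 / real N < \<epsilon>" using arch_inv by blast
    show "\<exists>N. \<forall>n\<ge>N. \<forall>W\<in>ball_sequence n. \<forall>x\<in>W. \<forall>y\<in>W. dist (x::'a) y \<le> \<epsilon>"
    proof (intro exI[of _ N] allI impI ballI)
      fix n W x y assume nN: "N \<le> n" and W: "W \<in> ball_sequence n" and x: "(x::'a) \<in> W" and y: "y \<in> W"
      have n: "n > 0" using nN N by simp
      obtain c where c: "W = ball c (1 / real n)" using bs_cases[OF W n] .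
      have "dist x y \<le> max (dist x c) (dist c y)" using um_ineq[OF um] .
      also have "\<dots> < 1 / real n" using x y c by (simp add: dist_commute)
      also have "\<dots> \<le> 1 / real N" using nN N by (intro frac_le) auto
      finally show "dist x y \<le> \<epsilon>" using N by simp
    qed
  qed
  have S: "\<forall>n. \<exists>\<rho>>0. \<forall>W\<in>ball_sequence n. \<forall>W'\<in>ball_sequence n. W \<noteq> W' \<longrightarrow>
          (\<forall>x\<in>W. \<forall>y\<in>W'. dist (x::'a) y \<ge> \<rho>)"
  proof
    fix n
    show "\<exists>\<rho>>0. \<forall>W\<in>ball_sequence n. \<forall>W'\<in>ball_sequence n. W \<noteq> W' \<longrightarrow>
          (\<forall>x\<in>W. \<forall>y\<in>W'. dist (x::'a) y \<ge> \<rho>)"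
    proof (cases "n = 0")
      case True then show ?thesis by (intro exI[of _ 1]) (simp add: ball_sequence_def)
    next
      case False
      then have n: "n > 0" by simp
      show ?thesis
      proof (intro exI[of _ "1 / real n"] conjI ballI impI)
        show "0 < 1 / real n" using n by simp
      next
        fix W W' x y assume W: "W \<in> ball_sequence n" and W': "W' \<in> ball_sequence n"
          and ne: "W \<noteq> W'" and x: "(x::'a) \<in> W" and y: "y \<in> W'"
        obtain a where a: "W = ball a (1 / real n)" using bs_cases[OF W n] .
        obtain b where b: "W' = ball b (1 / real n)" using bs_cases[OF W' n] .
        show "1 / real n \<le> dist x y"
        proof (rule ccontr)
          assume "\<not> 1 / real n \<le> dist x y"
          then have "y \<in> ball x (1 / real n)" by simp
          then have "ball y (1 / real n) = ball x (1 / real n)" using um_ball_eq[OF um, of y x] by simp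
          moreover have "ball x (1 / real n) = W" using x a um_ball_eq[OF um, of x a] by simp
          moreover have "ball y (1 / real n) = W'" using y b um_ball_eq[OF um, of y b] by simp
          ultimately show False using ne by simp
        qed
      qed
    qed
  qed
  show ?thesis using D S by (simp add: tame_defining_sequence_def)
qed


lemma bs_compl_imp_uA:
  assumes um: "ultrametric_space TYPE('a::metric_space)"
    and cd: "complete_defining_sequence (ball_sequence :: nat \<Rightarrow> 'a set set)"
  shows "u_A_complete (ball_sequence :: nat \<Rightarrow> 'a set set)"
  unfolding u_A_complete_def
proof (intro allI impI)
  fix f :: "nat \<Rightarrow> 'a"
  assume C: "\<forall>\<epsilon>>0. \<exists>N. \<forall>m\<ge>N. \<forall>n\<ge>N. u_A ball_sequence (f m) (f n) < \<epsilon>"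
  have "\<forall>n. \<exists>N. n > 0 \<longrightarrow> (\<forall>m\<ge>N. \<forall>k\<ge>N. dist (f m) (f k) < 1 / real n)"
  proof
    fix n :: nat
    show "\<exists>N. n > 0 \<longrightarrow> (\<forall>m\<ge>N. \<forall>k\<ge>N. dist (f m) (f k) < 1 / real n)"
    proof (cases "n > 0")
      case True
      have "(1::real) / (real n + 1) > 0" by simp
      then obtain N where N: "\<forall>m\<ge>N. \<forall>k\<ge>N. u_A ball_sequence (f m) (f k) < 1 / (real n + 1)"
        using C by blast
      show ?thesis using N uA_small_dist[OF um True] by blast
    qed simp
  qed
  then obtain N where N: "\<And>n. n > 0 \<Longrightarrow> \<forall>m\<ge>N n. \<forall>k\<ge>N n. dist (f m) (f k) < 1 / real n"
    by metis
  define M where "M n = (\<Sum>i\<le>n. N i)" for n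
  have Mmono: "M m \<le> M n" if "m \<le> n" for m n
    unfolding M_def using that by (intro sum_mono2) auto
  have NM: "N n \<le> M n" for n
    unfolding M_def by (rule member_le_sum) auto
  define V where "V n = (if n = 0 then UNIV else ball (f (M n)) (1 / real n))" for n
  have Vin: "V n \<in> ball_sequence n" for n
    by (simp add: V_def ball_sequence_def)
  have Vdec: "V (Suc n) \<subseteq> V n" for n
  proof (cases "n = 0")
    case True then show ?thesis by (simp add: V_def)
  next
    case False
    then have n: "n > 0" by simp
    show ?thesis
    proof
      fix y assume "y \<in> V (Suc n)"
      then have y: "dist (f (M (Suc n))) y < 1 / real (Suc n)" by (simp add: V_def)
      have "1 / real (Suc n) \<le> 1 / real n" using n by (intro frac_le) auto
      with y have y': "dist (f (M (Suc n))) y < 1 / real n" by linarith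
      have "M n \<ge> N n" using NM[of n] .
      moreover have "M (Suc n) \<ge> N n" using NM[of n] Mmono[of n "Suc n"] by linarith
      ultimately have d: "dist (f (M n)) (f (M (Suc n))) < 1 / real n" using N[OF n] by blast
      have "dist (f (M n)) y \<le> max (dist (f (M n)) (f (M (Suc n)))) (dist (f (M (Suc n))) y)"
        using um_ineq[OF um] .
      also have "\<dots> < 1 / real n" using d y' by simp
      finally show "y \<in> V n" using n by (simp add: V_def)
    qed
  qed
  have "(\<Inter>n. V n) \<noteq> {}" using cd Vin Vdec unfolding complete_defining_sequence_def by blast
  then obtain x where x: "\<And>n. x \<in> V n" by blast
  show "\<exists>x. \<forall>\<epsilon>>0. \<exists>N. \<forall>n\<ge>N. u_A ball_sequence (f n) x < \<epsilon>"
  proof (intro exI[of _ x] allI impI)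
    fix \<epsilon> :: real assume "\<epsilon> > 0"
    then obtain n where n: "n > 0" "1 / real n < \<epsilon>" using arch_inv by blast
    have "1 / (real n + 1) \<le> 1 / real n" using n by (intro frac_le) auto
    with n have e: "1 / (real n + 1) < \<epsilon>" by linarith
    show "\<exists>K. \<forall>m\<ge>K. u_A ball_sequence (f m) x < \<epsilon>"
    proof (intro exI[of _ "M n"] allI impI)
      fix m assume m: "M n \<le> m"
      have "N n \<le> m" "N n \<le> M n" using m NM[of n] by auto
      then have d1: "dist (f m) (f (M n)) < 1 / real n" using N[OF n(1)] by blast
      have d2: "dist (f (M n)) x < 1 / real n" using x[of n] n by (simp add: V_def)
      have "dist (f m) x \<le> max (dist (f m) (f (M n))) (dist (f (M n)) x)" using um_ineq[OF um] .
      also have "\<dots> < 1 / real n" using d1 d2 by simp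
      finally have "u_A ball_sequence (f m) x < 1 / (real n + 1)" using uA_small[OF um n(1)] by blast
      then show "u_A ball_sequence (f m) x < \<epsilon>" using e by linarith
    qed
  qed
qed

lemma bs_uA_imp_compl:
  assumes um: "ultrametric_space TYPE('a::metric_space)"
    and uc: "u_A_complete (ball_sequence :: nat \<Rightarrow> 'a set set)"
  shows "complete_defining_sequence (ball_sequence :: nat \<Rightarrow> 'a set set)"
  unfolding complete_defining_sequence_def
proof (intro allI impI)
  fix V :: "nat \<Rightarrow> 'a set"
  assume H: "(\<forall>n. V n \<in> ball_sequence n) \<and> (\<forall>n. V (Suc n) \<subseteq> V n)"
  then have Vn: "\<And>n. V n \<in> ball_sequence n" and dec: "\<And>n. V (Suc n) \<subseteq> V n" by auto
  have anti: "V m \<subseteq> V n" if "n \<le> m" for m n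
    using that
  proof (induction rule: dec_induct)
    case base then show ?case by simp
  next
    case (step k) then show ?case using dec[of k] by blast
  qed
  have ne: "V n \<noteq> {}" for n
    using bs_partition[OF um, of n] Vn[of n] unfolding is_partition_def by blast
  then have "\<forall>n. \<exists>y. y \<in> V n" by blast
  then obtain x where x: "\<And>n. x n \<in> V n" by metis
  have key: "dist (x m) (x k) < 1 / real n" if n: "n > 0" and "n \<le> m" "n \<le> k" for n m k
  proof -
    obtain c where c: "V n = ball c (1 / real n)" using bs_cases[OF Vn[of n] n] .
    have "x m \<in> V n" "x k \<in> V n" using x anti that by blast+
    then have "dist c (x m) < 1 / real n" "dist c (x k) < 1 / real n" using c by auto
    then have "dist (x m) c < 1 / real n" "dist c (x k) < 1 / real n" by (auto simp: dist_commute)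
    moreover have "dist (x m) (x k) \<le> max (dist (x m) c) (dist c (x k))" using um_ineq[OF um] .
    ultimately show ?thesis by simp
  qed
  have C: "\<forall>\<epsilon>>0. \<exists>N. \<forall>m\<ge>N. \<forall>k\<ge>N. u_A ball_sequence (x m) (x k) < \<epsilon>"
  proof (intro allI impI)
    fix \<epsilon> :: real assume "\<epsilon> > 0"
    then obtain n where n: "n > 0" "1 / real n < \<epsilon>" using arch_inv by blast
    have "1 / (real n + 1) \<le> 1 / real n" using n by (intro frac_le) auto
    with n have e: "1 / (real n + 1) < \<epsilon>" by linarith
    show "\<exists>N. \<forall>m\<ge>N. \<forall>k\<ge>N. u_A ball_sequence (x m) (x k) < \<epsilon>"
    proof (intro exI[of _ n] allI impI)
      fix m k assume "n \<le> m" "n \<le> k"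
      then have "u_A ball_sequence (x m) (x k) < 1 / (real n + 1)"
        using uA_small[OF um n(1)] key[OF n(1)] by blast
      then show "u_A ball_sequence (x m) (x k) < \<epsilon>" using e by linarith
    qed
  qed
  then obtain y where y: "\<forall>\<epsilon>>0. \<exists>N. \<forall>n\<ge>N. u_A ball_sequence (x n) y < \<epsilon>"
    using uc unfolding u_A_complete_def by blast
  have "y \<in> V n" for n
  proof (cases "n = 0")
    case True then show ?thesis using Vn[of 0] by (simp add: ball_sequence_def)
  next
    case False
    then have n: "n > 0" by simp
    have "(1::real) / (real n + 1) > 0" by simp
    then obtain K where K: "\<forall>m\<ge>K. u_A ball_sequence (x m) y < 1 / (real n + 1)" using y by blast
    define m where "m = max K n"
    have "u_A ball_sequence (x m) y < 1 / (real n + 1)" using K m_def by simp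
    then have d1: "dist (x m) y < 1 / real n" using uA_small_dist[OF um n] by blast
    obtain c where c: "V n = ball c (1 / real n)" using bs_cases[OF Vn[of n] n] .
    have "x m \<in> V n" using x anti m_def by (metis max.cobounded2 subsetD)
    then have d2: "dist c (x m) < 1 / real n" using c by simp
    have "dist c y \<le> max (dist c (x m)) (dist (x m) y)" using um_ineq[OF um] .
    also have "\<dots> < 1 / real n" using d1 d2 by simp
    finally show "y \<in> V n" using c by simp
  qed
  then show "(\<Inter>n. V n) \<noteq> {}" by blast
qed

theorem proposition3p11:
  assumes "ultrametric_space TYPE('a::metric_space)"
  shows "defining_sequence (ball_sequence :: nat \<Rightarrow> 'a set set) \<and>
         tame_defining_sequence (ball_sequence :: nat \<Rightarrow> 'a set set) \<and>
         (complete_defining_sequence (ball_sequence :: nat \<Rightarrow> 'a set set) \<longleftrightarrow>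
          u_A_complete (ball_sequence :: nat \<Rightarrow> 'a set set))"
  using bs_defining[OF assms] bs_tame[OF assms] bs_compl_imp_uA[OF assms] bs_uA_imp_compl[OF assms]
  by blast

end
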